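(* For every Parikh vector $P \in \mathbb{N}_0^{\sigma}$ with $n = \sum_{a\in\Sigma} P[a] \geq 1$, the diameter of the configuration graph $G(P)$ equals $n - \max_{a \in \Sigma} P[a]$.
   Context: Alphabet $\Sigma = [\sigma]$. For $P \in \mathbb{N}_0^\sigma$, $n := \sum_a P[a]$ and $\Sigma^{*|_P}$ is the set of words of length $n$ over $\Sigma$ in which each symbol $a$ occurs exactly $P[a]$ times. For a word $w$ and $i\neq j$ with $w[i]\neq w[j]$, the 2-swap $w\circ(i,j)$ exchanges the symbols at positions $i$ and $j$. The configuration graph $G(P)$ has vertex set $\Sigma^{*|_P}$ and an edge $\{w,u\}$ whenever $u = w\circ(i,j)$ for some 2-swap. $G(P)$ is connected; its diameter is the maximum over pairs of vertices of their shortest-path distance. *)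

theory Defs
  imports Main
begin

text \<open>Alphabet [sigma] is rendered as {0..<sigma}; a Parikh vector P is a list
  of length sigma, P ! a being the multiplicity of symbol a.\<close>

definition words_of :: "nat list \<Rightarrow> nat list set" where
  "words_of P = {w. length w = sum_list P \<and> set w \<subseteq> {..<length P}
                   \<and> (\<forall>a < length P. count_list w a = P ! a)}"

definition swap2 :: "nat list \<Rightarrow> nat \<Rightarrow> nat \<Rightarrow> nat list" where
  "swap2 w i j = w[i := w ! j, j := w ! i]"

definition swap_edge :: "nat list \<Rightarrow> nat list \<Rightarrow> bool" where
  "swap_edge w u \<longleftrightarrow> (\<exists>i j. i < length w \<and> j < length w \<and> i \<noteq> j
                          \<and> w ! i \<noteq> w ! j \<and> u = swap2 w i j)"

definition graph_dist :: "nat list \<Rightarrow> nat list \<Rightarrow> nat" where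
  "graph_dist w u = (LEAST k. (swap_edge ^^ k) w u)"

definition diameter :: "nat list \<Rightarrow> nat" where
  "diameter P = Max {graph_dist w u | w u. w \<in> words_of P \<and> u \<in> words_of P}"

end

theory Submission
  imports Defs "HOL-Library.Multiset"
begin

lemma count_card: "count (mset xs) b = card {j. j < length xs \<and> xs ! j = b}"
  by (simp add: count_mset count_list_eq_length_filter length_filter_conv_card eq_commute)

lemma swap2_length[simp]: "length (swap2 w i j) = length w"
  by (simp add: swap2_def)

lemma swap2_nth: "i < length w \<Longrightarrow> j < length w \<Longrightarrow> t < length w \<Longrightarrow>
  swap2 w i j ! t = (if t = j then w ! i else if t = i then w ! j else w ! t)"
  by (simp add: swap2_def nth_list_update)

lemma swap2_mset: "i < length w \<Longrightarrow> j < length w \<Longrightarrow> mset (swap2 w i j) = mset w"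
  unfolding swap2_def
  by (metis list_update_swap mset_swap)

lemma cnt_lemma:
  assumes "length v = length u" "mset v = mset u" "i < length u" "u ! i = b" "v ! i \<noteq> b"
  shows "\<exists>j<length u. v ! j = b \<and> u ! j \<noteq> b"
proof (rule ccontr)
  assume "\<not> ?thesis"
  hence "{j. j < length v \<and> v ! j = b} \<subset> {j. j < length u \<and> u ! j = b}"
    using assms by auto
  hence "card {j. j < length v \<and> v ! j = b} < card {j. j < length u \<and> u ! j = b}"
    by (intro psubset_card_mono) auto
  thus False using assms(2) by (metis count_card less_irrefl)
qed

lemma ub:
  "length v = length u \<Longrightarrow> mset v = mset u \<Longrightarrow>
   \<exists>k \<le> card {i. i < length u \<and> u!i \<noteq> a \<and> v!i \<noteq> u!i}. (swap_edge^^k) v u"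
proof (induction "card {i. i < length u \<and> u!i \<noteq> a \<and> v!i \<noteq> u!i}" arbitrary: v rule: less_induct)
  case less
  define H where "H v = {i. i < length u \<and> u!i \<noteq> a \<and> v!i \<noteq> u!i}" for v
  have finH: "finite (H v)" for v unfolding H_def by auto
  show ?case
  proof (cases "H v = {}")
    case True
    have "v = u"
    proof (rule nth_equalityI)
      show "length v = length u" by fact
      fix i assume i: "i < length v"
      show "v ! i = u ! i"
      proof (rule ccontr)
        assume ne: "v ! i \<noteq> u ! i"
        hence "u ! i = a" using True i less.prems unfolding H_def by auto
        obtain j where j: "j < length v" "u ! j = v ! i" "v ! j \<noteq> v ! i"
          using cnt_lemma[of u v i "v!i"] less.prems i ne by auto
        hence "j \<in> H v" unfolding H_def using \<open>u ! i = a\<close> ne less.prems by auto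
        thus False using True by auto
      qed
    qed
    thus ?thesis by auto
  next
    case False
    then obtain i where i: "i \<in> H v" by auto
    hence il: "i < length u" "u ! i \<noteq> a" "v ! i \<noteq> u ! i" unfolding H_def by auto
    obtain j where j: "j < length u" "v ! j = u ! i" "u ! j \<noteq> u ! i"
      using cnt_lemma[OF less.prems il(1) refl il(3)] by auto
    define v' where "v' = swap2 v i j"
    have ij: "i \<noteq> j" using j il by auto
    have edge: "swap_edge v v'"
      unfolding swap_edge_def v'_def using il j ij less.prems by (metis)
    have lv': "length v' = length u" using less.prems by (simp add: v'_def)
    have mv': "mset v' = mset u" using less.prems il j by (simp add: v'_def swap2_mset)
    have "H v' \<subseteq> H v - {i}"
      unfolding H_def v'_def using il j less.prems by (auto simp: swap2_nth split: if_splits)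
    hence "H v' \<subset> H v" using i by auto
    hence lt: "card (H v') < card (H v)" using finH by (simp add: psubset_card_mono)
    obtain k where k: "k \<le> card (H v')" "(swap_edge^^k) v' u"
      using less.hyps[OF lt[unfolded H_def] lv' mv'] unfolding H_def by auto
    have "(swap_edge^^Suc k) v u" using edge k(2) by (rule relpowp_Suc_I2)
    moreover have "Suc k \<le> card (H v)" using k lt by simp
    ultimately show ?thesis unfolding H_def by blast
  qed
qed


definition good :: "nat \<Rightarrow> nat list \<Rightarrow> nat list \<Rightarrow> (nat \<Rightarrow> nat) \<Rightarrow> bool" where
  "good n v u f \<longleftrightarrow> (\<forall>C x. card {k. k < n \<and> f k \<in> C \<and> v!k = x} = card {k. k < n \<and> f k \<in> C \<and> u!k = x})"

lemma swap_card:
  assumes "i < n" "j < n" "length v = n" "i \<in> K \<longleftrightarrow> j \<in> K"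
  shows "card {k. k < n \<and> k \<in> K \<and> swap2 v i j ! k = x} = card {k. k < n \<and> k \<in> K \<and> v ! k = x}"
proof (cases "i \<in> K")
  case False
  hence "{k. k < n \<and> k \<in> K \<and> swap2 v i j ! k = x} = {k. k < n \<and> k \<in> K \<and> v ! k = x}"
    using assms by (auto simp: swap2_nth)
  thus ?thesis by simp
next
  case True
  define t where "t k = (if k = i then j else if k = j then i else k)" for k
  have inj: "inj_on t A" for A unfolding t_def inj_on_def by auto
  have "{k. k < n \<and> k \<in> K \<and> swap2 v i j ! k = x} = t ` {k. k < n \<and> k \<in> K \<and> v ! k = x}"
  proof (rule set_eqI, rule iffI)
    fix k assume k: "k \<in> {k. k < n \<and> k \<in> K \<and> swap2 v i j ! k = x}"
    have "t k \<in> {k. k < n \<and> k \<in> K \<and> v ! k = x}" "t (t k) = k"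
      using k assms True unfolding t_def by (auto simp: swap2_nth)
    thus "k \<in> t ` {k. k < n \<and> k \<in> K \<and> v ! k = x}" by (metis image_eqI)
  next
    fix k assume "k \<in> t ` {k. k < n \<and> k \<in> K \<and> v ! k = x}"
    then obtain k' where "k = t k'" "k' < n" "k' \<in> K" "v ! k' = x" by auto
    thus "k \<in> {k. k < n \<and> k \<in> K \<and> swap2 v i j ! k = x}"
      using assms True by (auto simp: t_def swap2_nth)
  qed
  thus ?thesis using inj by (simp add: card_image)
qed

lemma step:
  assumes g: "good n (swap2 v i j) u f" and ij: "i < n" "j < n" and lv: "length v = n"
  shows "\<exists>g. good n v u g \<and> card (f ` {..<n}) \<le> card (g ` {..<n}) + 1"
proof -
  define g where "g k = (if f k = f j then f i else f k)" for k
  have "f ` {..<n} - {f j} \<subseteq> g ` {..<n}"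
  proof
    fix c assume "c \<in> f ` {..<n} - {f j}"
    then obtain k where "k < n" "c = f k" "f k \<noteq> f j" by auto
    thus "c \<in> g ` {..<n}" unfolding g_def by (auto intro!: image_eqI[of _ _ k])
  qed
  hence "card (f ` {..<n} - {f j}) \<le> card (g ` {..<n})" by (simp add: card_mono)
  moreover have "card (f ` {..<n}) \<le> card (f ` {..<n} - {f j}) + 1"
    by (cases "f j \<in> f ` {..<n}") (auto simp: card_Diff_singleton card_gt_0_iff)
  ultimately have c: "card (f ` {..<n}) \<le> card (g ` {..<n}) + 1" by simp
  have "good n v u g"
    unfolding good_def
  proof (intro allI)
    fix C x
    define C' where "C' = (if f i \<in> C then C \<union> {f j} else C - {f j})"
    have e: "g k \<in> C \<longleftrightarrow> f k \<in> C'" for k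
      unfolding g_def C'_def by auto
    have "card {k. k < n \<and> g k \<in> C \<and> v!k = x} = card {k. k < n \<and> k \<in> {k. f k \<in> C'} \<and> v!k = x}"
      using e by simp
    also have "\<dots> = card {k. k < n \<and> k \<in> {k. f k \<in> C'} \<and> swap2 v i j!k = x}"
      by (rule swap_card[symmetric]) (use ij lv in \<open>auto simp: C'_def\<close>)
    also have "\<dots> = card {k. k < n \<and> f k \<in> C' \<and> u!k = x}"
      using g unfolding good_def by simp
    also have "\<dots> = card {k. k < n \<and> g k \<in> C \<and> u!k = x}" using e by simp
    finally show "card {k. k < n \<and> g k \<in> C \<and> v!k = x} = card {k. k < n \<and> g k \<in> C \<and> u!k = x}" .
  qed
  thus ?thesis using c by blast
qed

lemma path_length: "(swap_edge^^k) v u \<Longrightarrow> length v = length u"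
proof (induction k arbitrary: v)
  case 0 thus ?case by simp
next
  case (Suc k)
  obtain y where "swap_edge v y" "(swap_edge^^k) y u" using Suc.prems by (rule relpowp_Suc_E2)
  moreover have "length y = length v" using \<open>swap_edge v y\<close> unfolding swap_edge_def by auto
  ultimately show ?case using Suc.IH by metis
qed

lemma path_good: "(swap_edge^^k) v u \<Longrightarrow> \<exists>f. good (length u) v u f \<and> length u \<le> card (f ` {..<length u}) + k"
proof (induction k arbitrary: v)
  case 0
  hence "v = u" by simp
  moreover have "card (id ` {..<length u}) = length u" by simp
  ultimately show ?case unfolding good_def by (intro exI[of _ id]) simp
next
  case (Suc k)
  obtain y where e: "swap_edge v y" and p: "(swap_edge^^k) y u" using Suc.prems by (rule relpowp_Suc_E2)
  obtain f where f: "good (length u) y u f" "length u \<le> card (f ` {..<length u}) + k"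
    using Suc.IH[OF p] by auto
  have ly: "length y = length u" using path_length[OF p] .
  obtain i j where ij: "i < length v" "j < length v" "y = swap2 v i j"
    using e unfolding swap_edge_def by auto
  have lv: "length v = length u" using ly ij by simp
  obtain g where "good (length u) v u g" "card (f ` {..<length u}) \<le> card (g ` {..<length u}) + 1"
    using step[of "length u" v i j u f] f(1) ij lv by auto
  thus ?case using f(2) by (intro exI[of _ g]) auto
qed


lemma count_list_card: "count_list xs x = card {t. t < length xs \<and> xs ! t = x}"
  by (metis count_card count_mset)

lemma words_mset: "w \<in> words_of P \<Longrightarrow> mset v = mset w \<Longrightarrow> v \<in> words_of P"
  unfolding words_of_def
  by (auto simp flip: count_mset set_mset_mset size_mset)

lemma words_mset_eq: "w \<in> words_of P \<Longrightarrow> u \<in> words_of P \<Longrightarrow> mset w = mset u"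
  unfolding words_of_def multiset_eq_iff count_mset
proof (intro allI)
  fix x assume a: "w \<in> {w. length w = sum_list P \<and> set w \<subseteq> {..<length P} \<and> (\<forall>a<length P. count_list w a = P ! a)}"
    "u \<in> {w. length w = sum_list P \<and> set w \<subseteq> {..<length P} \<and> (\<forall>a<length P. count_list w a = P ! a)}"
  show "count_list w x = count_list u x"
  proof (cases "x < length P")
    case True thus ?thesis using a by auto
  next
    case False
    hence "x \<notin> set w" "x \<notin> set u" using a by auto
    thus ?thesis by (simp add: count_list_0_iff)
  qed
qed

lemma count_list_rep: "count_list (replicate k b) x = (if x = b then k else 0)"
  by (induction k) auto

lemma count_blocks: "distinct bs \<Longrightarrow>
  count_list (concat (map (\<lambda>b. replicate (P!b) b) bs)) x = (if x \<in> set bs then P!x else 0)"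
  by (induction bs) (auto simp: count_list_rep)

lemma length_blocks: "length (concat (map (\<lambda>b. replicate (P!b) b) bs)) = sum_list (map (nth P) bs)"
  by (induction bs) auto

lemma W_words: "concat (map (\<lambda>b. replicate (P!b) b) [0..<length P]) \<in> words_of P"
  unfolding words_of_def
  using count_blocks[of "[0..<length P]" P] length_blocks[of P "[0..<length P]"]
  by (auto simp: map_nth)


lemma sorted_facts:
  fixes w :: "nat list" and r :: "nat \<Rightarrow> nat"
  assumes srt: "sorted (map r w)"
  and inj: "\<forall>x\<in>set w. \<forall>y\<in>set w. r x = r y \<longrightarrow> x = y"
  and top: "\<forall>x\<in>set w. x \<noteq> a \<longrightarrow> r x < r a"
  and cnt: "\<forall>x. count_list w x \<le> m" and ca: "count_list w a = m"
  shows "k + m < length w \<Longrightarrow> r (w!k) < r (w!(k+m))"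
    and "length w - m \<le> k \<Longrightarrow> k < length w \<Longrightarrow> w!k = a"
proof -
  have mono: "i \<le> j \<Longrightarrow> j < length w \<Longrightarrow> r (w!i) \<le> r (w!j)" for i j
    using srt by (auto simp: sorted_iff_nth_mono)
  {
    assume km: "k + m < length w"
    show "r (w!k) < r (w!(k+m))"
    proof (rule ccontr)
      assume "\<not> ?thesis"
      hence le: "r (w!(k+m)) \<le> r (w!k)" by simp
      have "{k..k+m} \<subseteq> {t. t < length w \<and> w!t = w!k}"
      proof
        fix t assume t: "t \<in> {k..k+m}"
        hence "r (w!t) = r (w!k)" using mono[of k t] mono[of t "k+m"] le km by auto
        thus "t \<in> {t. t < length w \<and> w!t = w!k}" using inj t km by auto
      qed
      hence "card {k..k+m} \<le> card {t. t < length w \<and> w!t = w!k}" by (intro card_mono) auto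
      hence "m + 1 \<le> count_list w (w!k)" by (simp add: count_list_card)
      thus False using cnt by (metis add_le_same_cancel1 le_trans not_one_le_zero)
    qed
  }
  {
    assume k: "length w - m \<le> k" "k < length w"
    show "w!k = a"
    proof (rule ccontr)
      assume na: "w!k \<noteq> a"
      have "{t. t < length w \<and> w!t = a} \<subseteq> {k<..<length w}"
      proof
        fix t assume t: "t \<in> {t. t < length w \<and> w!t = a}"
        show "t \<in> {k<..<length w}"
        proof (rule ccontr)
          assume "t \<notin> {k<..<length w}"
          hence "t \<le> k" using t by auto
          hence "r (w!t) \<le> r (w!k)" using mono k by auto
          moreover have "r (w!k) < r a" using top na k by auto
          ultimately show False using t by auto
        qed
      qed
      hence "card {t. t < length w \<and> w!t = a} \<le> card {k<..<length w}" by (intro card_mono) auto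
      hence "m \<le> length w - Suc k" using ca by (simp add: count_list_card)
      thus False using k by linarith
    qed
  }
qed


lemma class_bound:
  assumes good: "good n w u f" and n: "length w = n" "length u = n"
  and rank: "\<forall>k<n. w!k \<noteq> a \<longrightarrow> r (w!k) < (r (u!k) :: nat)"
  shows "card (f ` {..<n}) \<le> count_list w a"
proof -
  have sub: "f ` {..<n} \<subseteq> f ` {k. k < n \<and> w!k = a}"
  proof
    fix c assume "c \<in> f ` {..<n}"
    then obtain k0 where k0: "k0 < n" "f k0 = c" by auto
    show "c \<in> f ` {k. k < n \<and> w!k = a}"
    proof (rule ccontr)
      assume na: "c \<notin> f ` {k. k < n \<and> w!k = a}"
      obtain k1 where k1: "k1 < n \<and> f k1 = c"
        and mn: "\<forall>y. y < n \<and> f y = c \<longrightarrow> r (w!k1) \<le> r (w!y)"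
        using ex_has_least_nat[of "\<lambda>k. k < n \<and> f k = c" k0 "\<lambda>k. r (w!k)"] k0 by blast
      define b where "b = w!k1"
      have "card {k. k < n \<and> f k \<in> {c} \<and> w!k = b} = card {k. k < n \<and> f k \<in> {c} \<and> u!k = b}"
        using good unfolding good_def by blast
      moreover have "{k. k < n \<and> f k \<in> {c} \<and> w!k = b} \<noteq> {}" using k1 b_def by auto
      moreover have "finite {k. k < n \<and> f k \<in> {c} \<and> w!k = b}" by auto
      ultimately have "{k. k < n \<and> f k \<in> {c} \<and> u!k = b} \<noteq> {}" by (metis card_0_eq card.infinite)
      then obtain k where k: "k < n" "f k = c" "u!k = b" by auto
      have "w!k \<noteq> a" using na k by auto
      hence "r (w!k) < r (u!k)" using rank k by auto
      moreover have "r (w!k1) \<le> r (w!k)" using mn k by auto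
      ultimately show False using k b_def by simp
    qed
  qed
  have "card (f ` {..<n}) \<le> card (f ` {k. k < n \<and> w!k = a})"
    using sub by (intro card_mono) auto
  also have "\<dots> \<le> card {k. k < n \<and> w!k = a}" by (rule card_image_le) auto
  also have "\<dots> = count_list w a" using n by (simp add: count_list_card)
  finally show ?thesis .
qed

theorem theorem1:
  fixes P :: "nat list"
  assumes "sum_list P \<ge> 1"
  shows "diameter P = sum_list P - Max (set P)"
proof -
  define \<sigma> where "\<sigma> = length P"
  define n where "n = sum_list P"
  have Pne: "P \<noteq> []" using assms by auto
  have "Max (set P) \<in> set P" using Pne by simp
  then obtain a where a: "a < \<sigma>" "P!a = Max (set P)" unfolding \<sigma>_def by (metis in_set_conv_nth)
  define m where "m = P!a"
  have Pb: "b < \<sigma> \<Longrightarrow> P!b \<le> m" for b unfolding m_def a(2) \<sigma>_def by simp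
  define r where "r x = (if x = a then \<sigma> else x)" for x
  define W where "W = concat (map (\<lambda>b. replicate (P!b) b) [0..<length P])"
  define w0 where "w0 = sort_key r W"
  define u0 where "u0 = rotate m w0"
  have W: "W \<in> words_of P" unfolding W_def by (rule W_words)
  have w0: "w0 \<in> words_of P" using words_mset[OF W] unfolding w0_def by simp
  have u0: "u0 \<in> words_of P" unfolding u0_def by (rule words_mset[OF w0]) (metis rotate_drop_take mset_append union_commute append_take_drop_id)
  have lw0: "length w0 = n" "set w0 \<subseteq> {..<\<sigma>}" "\<And>x. x < \<sigma> \<Longrightarrow> count_list w0 x = P!x"
    using w0 unfolding words_of_def n_def \<sigma>_def by auto
  have lu0: "length u0 = n" unfolding u0_def using lw0 by simp
  have cnt: "\<forall>x. count_list w0 x \<le> m"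
  proof
    fix x show "count_list w0 x \<le> m"
    proof (cases "x < \<sigma>")
      case True thus ?thesis using lw0 Pb by simp
    next
      case False hence "x \<notin> set w0" using lw0 by auto
      thus ?thesis by (simp add: count_list_0_iff)
    qed
  qed
  have ca: "count_list w0 a = m" using lw0 a unfolding m_def by simp
  have srt: "sorted (map r w0)" unfolding w0_def by simp
  have inj: "\<forall>x\<in>set w0. \<forall>y\<in>set w0. r x = r y \<longrightarrow> x = y"
    using lw0(2) unfolding r_def by auto
  have top: "\<forall>x\<in>set w0. x \<noteq> a \<longrightarrow> r x < r a"
    using lw0(2) unfolding r_def by auto
  note SF = sorted_facts[OF srt inj top cnt ca]
  have "count_list w0 a \<le> length w0" by (simp add: count_list_eq_length_filter)
  hence mn: "m \<le> n" using ca lw0(1) by simp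
  have rank: "\<forall>k<n. w0!k \<noteq> a \<longrightarrow> r (w0!k) < r (u0!k)"
  proof (intro allI impI)
    fix k assume k: "k < n" "w0!k \<noteq> a"
    have "k + m < n"
    proof (rule ccontr)
      assume "\<not> k + m < n"
      hence "length w0 - m \<le> k" using lw0 by simp
      thus False using SF(2)[of k] k lw0 by simp
    qed
    hence "u0!k = w0!(k+m)" unfolding u0_def using lw0 k by (simp add: nth_rotate add.commute)
    thus "r (w0!k) < r (u0!k)" using SF(1)[of k] \<open>k + m < n\<close> lw0 by simp
  qed
  have upper: "\<exists>k\<le>n - m. (swap_edge^^k) w u" if w: "w \<in> words_of P" and u: "u \<in> words_of P" for w u
  proof -
    have lw: "length w = n" "length u = n" using w u unfolding words_of_def n_def by auto
    have cu: "count_list u a = m" using u a unfolding words_of_def m_def \<sigma>_def by auto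
    obtain k where k: "k \<le> card {i. i < length u \<and> u!i \<noteq> a \<and> w!i \<noteq> u!i}" "(swap_edge^^k) w u"
      using ub[of w u a] lw words_mset_eq[OF w u] by auto
    have "card {i. i < length u \<and> u!i \<noteq> a \<and> w!i \<noteq> u!i} \<le> card ({..<n} - {i. i < length u \<and> u!i = a})"
      using lw by (intro card_mono) auto
    also have "\<dots> = n - m"
      using lw cu by (subst card_Diff_subset) (auto simp: count_list_card)
    finally have "k \<le> n - m" using k(1) by simp
    thus ?thesis using k(2) by blast
  qed
  have dist_le: "graph_dist w u \<le> n - m" if wu: "w \<in> words_of P" "u \<in> words_of P" for w u
  proof -
    obtain k where "k \<le> n - m" and "(swap_edge^^k) w u" using upper[OF wu] by auto
    moreover have "graph_dist w u \<le> k" unfolding graph_dist_def by (rule Least_le) fact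
    ultimately show ?thesis by simp
  qed
  have dist_ge: "n - m \<le> graph_dist w0 u0"
  proof -
    obtain k0 where "(swap_edge^^k0) w0 u0" using upper[OF w0 u0] by auto
    hence p: "(swap_edge^^(graph_dist w0 u0)) w0 u0" unfolding graph_dist_def by (rule LeastI)
    obtain f where f: "good (length u0) w0 u0 f" "length u0 \<le> card (f ` {..<length u0}) + graph_dist w0 u0"
      using path_good[OF p] by auto
    have "card (f ` {..<n}) \<le> m"
      using class_bound[of n w0 u0 f a r] f(1) lw0(1) lu0 rank ca by simp
    thus ?thesis using f(2) lu0 by simp
  qed
  have eq: "graph_dist w0 u0 = n - m" using dist_le[OF w0 u0] dist_ge by simp
  have "diameter P = n - m"
    unfolding diameter_def
  proof (rule Max_eqI)
    show "finite {graph_dist w u |w u. w \<in> words_of P \<and> u \<in> words_of P}"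
      by (rule finite_subset[of _ "{..n - m}"]) (auto dest: dist_le)
    show "y \<le> n - m" if "y \<in> {graph_dist w u |w u. w \<in> words_of P \<and> u \<in> words_of P}" for y
      using that dist_le by auto
    show "n - m \<in> {graph_dist w u |w u. w \<in> words_of P \<and> u \<in> words_of P}"
      using eq w0 u0 by force
  qed
  thus ?thesis unfolding n_def m_def a(2) .
qed

end
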